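(* For a finite set $I$ let $co\mathcal{BVH}gra(I)$ be the free graded commutative algebra over a field $\mathbb K$ of characteristic zero generated by degree $1$ variables $\theta_{ij}=\theta_{ji}$ ($i\neq j\in I$) and degree $2$ variables $\Theta_{ijk}$ ($i,j,k\in I$) satisfying $\Theta_{ijk}=-\Theta_{jik}=-\Theta_{ikj}$, with no further relations. For a decomposition $I=I'\sqcup I''$ into nonempty subsets and new symbols $x',x''$, define algebra morphisms $\Delta_{I',I''}:co\mathcal{BVH}gra(I)\to co\mathcal{BVH}gra(I'\sqcup\{x'\})\otimes co\mathcal{BVH}gra(\{x''\}\sqcup I'')$ on generators by $$\Delta_{I',I''}(\theta_{ij})=\begin{cases}\theta_{ij}\otimes1& i,j\in I'\\ 1\otimes\theta_{ij}& i,j\in I''\\ \theta_{ix'}\otimes1+1\otimes\theta_{x''j}& i\in I',\ j\in I''\end{cases}$$ $$\Delta_{I',I''}(\Theta_{ijk})=\begin{cases}\Theta_{ijk}\otimes1& i,j,k\in I'\\ 1\otimes\Theta_{ijk}& i,j,k\in I''\\ \Theta_{ijx'}\otimes1-(\theta_{ix'}-\theta_{jx'})\otimes\theta_{x''k}& i,j\in I',\ k\in I''\\ 1\otimes\Theta_{x''jk}+\theta_{ix'}\otimes(\theta_{x''j}-\theta_{x''k})& i\in I',\ j,k\in I''\end{cases}$$ (the remaining cases being determined by the symmetries of $\theta$ and $\Theta$). Then this makes $co\mathcal{BVH}gra=\{co\mathcal{BVH}gra(I)\}$ a cyclic Hopf cooperad: the maps are natural in $I$ and for every decomposition $I=I'\sqcup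 I''\sqcup I'''$ into nonempty subsets one has $\Phi^L_{I',I'',I'''}=\Phi^R_{I',I'',I'''}$, where $\Phi^R=(\mathrm{Id}\otimes\Delta_{\{x''\}\sqcup I'',I'''})\circ\Delta_{I',I''\sqcup I'''}$ and $\Phi^L=(\Delta_{I',I''\sqcup\{y'\}}\otimes\mathrm{Id})\circ\Delta_{I'\sqcup I'',I'''}$, both mapping to $co\mathcal{BVH}gra(I'\sqcup\{x'\})\otimes co\mathcal{BVH}gra(\{x''\}\sqcup I''\sqcup\{y'\})\otimes co\mathcal{BVH}gra(\{y''\}\sqcup I''')$.
   Context: A cyclic cooperad is a functor $I\mapsto co\mathcal O(I)$ from the groupoid of finite sets to graded vector spaces together with natural maps $\Delta_{I',I''}:co\mathcal O(I)\to co\mathcal O(I'\sqcup\{x'\})\otimes co\mathcal O(\{x''\}\sqcup I'')$ for decompositions $I=I'\sqcup I''$ satisfying the coassociativity $\Phi^L=\Phi^R$ as written in the claim; it is Hopf if each $co\mathcal O(I)$ is a graded commutative algebra and all $\Delta_{I',I''}$ are algebra morphisms. No relation between the variables $\theta$ and $\Theta$ is imposed. *)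

theory Defs
  imports Main
begin

datatype ('g,'k) fexpr =
    Gen 'g
  | Sc 'k
  | Plus "('g,'k) fexpr" "('g,'k) fexpr"
  | Times "('g,'k) fexpr" "('g,'k) fexpr"

fun gens_of :: "('g,'k) fexpr \<Rightarrow> 'g set" where
  "gens_of (Gen g) = {g}"
| "gens_of (Sc a) = {}"
| "gens_of (Plus a b) = gens_of a \<union> gens_of b"
| "gens_of (Times a b) = gens_of a \<union> gens_of b"

definition wf_over :: "'g set \<Rightarrow> ('g,'k) fexpr \<Rightarrow> bool" where
  "wf_over G e \<longleftrightarrow> gens_of e \<subseteq> G"

fun subst :: "('g \<Rightarrow> ('h,'k) fexpr) \<Rightarrow> ('g,'k) fexpr \<Rightarrow> ('h,'k) fexpr" where
  "subst \<sigma> (Gen g) = \<sigma> g"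
| "subst \<sigma> (Sc a) = Sc a"
| "subst \<sigma> (Plus a b) = Plus (subst \<sigma> a) (subst \<sigma> b)"
| "subst \<sigma> (Times a b) = Times (subst \<sigma> a) (subst \<sigma> b)"

abbreviation Neg :: "('g,'k::ring_1) fexpr \<Rightarrow> ('g,'k) fexpr" where
  "Neg a \<equiv> Times (Sc (-1)) a"

abbreviation Minus :: "('g,'k::ring_1) fexpr \<Rightarrow> ('g,'k) fexpr \<Rightarrow> ('g,'k) fexpr" where
  "Minus a b \<equiv> Plus a (Neg b)"

text \<open>The congruence presenting the free (associative, unital) K-algebra on the generators,
  modulo graded commutativity of generators (od = odd degree) and the relations R.
  Over a field of characteristic 0 this is the free graded commutative algebra on the
  generators modulo R.\<close>
inductive gc_eq :: "('g \<Rightarrow> bool) \<Rightarrow> (('g,'k::field) fexpr \<times> ('g,'k) fexpr) set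
                     \<Rightarrow> ('g,'k) fexpr \<Rightarrow> ('g,'k) fexpr \<Rightarrow> bool"
  for od :: "'g \<Rightarrow> bool" and R :: "(('g,'k::field) fexpr \<times> ('g,'k) fexpr) set" where
  gc_refl: "gc_eq od R a a"
| gc_sym: "gc_eq od R a b \<Longrightarrow> gc_eq od R b a"
| gc_trans: "gc_eq od R a b \<Longrightarrow> gc_eq od R b c \<Longrightarrow> gc_eq od R a c"
| gc_plus_cong: "gc_eq od R a a' \<Longrightarrow> gc_eq od R b b' \<Longrightarrow> gc_eq od R (Plus a b) (Plus a' b')"
| gc_times_cong: "gc_eq od R a a' \<Longrightarrow> gc_eq od R b b' \<Longrightarrow> gc_eq od R (Times a b) (Times a' b')"
| gc_plus_assoc: "gc_eq od R (Plus (Plus a b) c) (Plus a (Plus b c))"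
| gc_plus_comm: "gc_eq od R (Plus a b) (Plus b a)"
| gc_plus_zero: "gc_eq od R (Plus a (Sc 0)) a"
| gc_plus_neg: "gc_eq od R (Plus a (Times (Sc (-1)) a)) (Sc 0)"
| gc_times_assoc: "gc_eq od R (Times (Times a b) c) (Times a (Times b c))"
| gc_one_l: "gc_eq od R (Times (Sc 1) a) a"
| gc_one_r: "gc_eq od R (Times a (Sc 1)) a"
| gc_distrib_l: "gc_eq od R (Times a (Plus b c)) (Plus (Times a b) (Times a c))"
| gc_distrib_r: "gc_eq od R (Times (Plus a b) c) (Plus (Times a c) (Times b c))"
| gc_sc_plus: "gc_eq od R (Plus (Sc x) (Sc y)) (Sc (x + y))"
| gc_sc_times: "gc_eq od R (Times (Sc x) (Sc y)) (Sc (x * y))"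
| gc_sc_central: "gc_eq od R (Times (Sc x) a) (Times a (Sc x))"
| gc_gen_comm: "gc_eq od R (Times (Gen g) (Gen h))
                   (Times (Sc (if od g \<and> od h then -1 else 1)) (Times (Gen h) (Gen g)))"
| gc_rel: "(a, b) \<in> R \<Longrightarrow> gc_eq od R a b"

inductive homog :: "('g \<Rightarrow> nat) \<Rightarrow> ('g,'k::zero) fexpr \<Rightarrow> nat \<Rightarrow> bool" for dg where
  homog_gen: "homog dg (Gen g) (dg g)"
| homog_sc: "homog dg (Sc a) 0"
| homog_zero: "homog dg (Sc 0) n"
| homog_plus: "homog dg a n \<Longrightarrow> homog dg b n \<Longrightarrow> homog dg (Plus a b) n"
| homog_times: "homog dg a n \<Longrightarrow> homog dg b m \<Longrightarrow> homog dg (Times a b) (n + m)"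

datatype 'a bvh = th 'a 'a | Th 'a 'a 'a

fun bdeg :: "'a bvh \<Rightarrow> nat" where
  "bdeg (th _ _) = 1"
| "bdeg (Th _ _ _) = 2"

definition bvh_gens :: "'a set \<Rightarrow> 'a bvh set" where
  "bvh_gens S = {th i j | i j. i \<in> S \<and> j \<in> S \<and> i \<noteq> j}
              \<union> {Th i j k | i j k. i \<in> S \<and> j \<in> S \<and> k \<in> S}"

text \<open>coBVHgra(S_0) \<otimes> ... \<otimes> coBVHgra(S_{n-1}), for Ss = [S_0,...,S_{n-1}]:
  generators are tagged by the index of their tensor factor.  coBVHgra(I) is the case [I].\<close>
definition tgens :: "'a set list \<Rightarrow> (nat \<times> 'a bvh) set" where
  "tgens Ss = {(m, g). m < length Ss \<and> g \<in> bvh_gens (Ss ! m)}"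

definition tdeg :: "nat \<times> 'a bvh \<Rightarrow> nat" where
  "tdeg = (\<lambda>(m, g). bdeg g)"

definition trels :: "'a set list \<Rightarrow> ((nat \<times> 'a bvh, 'k::field) fexpr \<times> (nat \<times> 'a bvh, 'k) fexpr) set" where
  "trels Ss =
     {(Gen (m, th i j), Gen (m, th j i)) | m i j.
         m < length Ss \<and> i \<in> Ss ! m \<and> j \<in> Ss ! m \<and> i \<noteq> j}
   \<union> {(Gen (m, Th i j k), Neg (Gen (m, Th j i k))) | m i j k.
         m < length Ss \<and> i \<in> Ss ! m \<and> j \<in> Ss ! m \<and> k \<in> Ss ! m}
   \<union> {(Gen (m, Th i j k), Neg (Gen (m, Th i k j))) | m i j k.
         m < length Ss \<and> i \<in> Ss ! m \<and> j \<in> Ss ! m \<and> k \<in> Ss ! m}"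

definition teq :: "'a set list \<Rightarrow> (nat \<times> 'a bvh, 'k::field) fexpr \<Rightarrow> (nat \<times> 'a bvh, 'k) fexpr \<Rightarrow> bool" where
  "teq Ss = gc_eq (\<lambda>(m, g). odd (bdeg g)) (trels Ss)"

text \<open>sigma (given on generators) defines a well-defined degree-preserving morphism of graded
  algebras from the tensor product over Ss to the tensor product over Ts.\<close>
definition is_tmorph :: "'a set list \<Rightarrow> 'a set list
     \<Rightarrow> (nat \<times> 'a bvh \<Rightarrow> (nat \<times> 'a bvh, 'k::field) fexpr) \<Rightarrow> bool" where
  "is_tmorph Ss Ts \<sigma> \<longleftrightarrow>
     (\<forall>g\<in>tgens Ss. wf_over (tgens Ts) (\<sigma> g) \<and>
         (\<exists>e. wf_over (tgens Ts) e \<and> teq Ts (\<sigma> g) e \<and> homog tdeg e (tdeg g))) \<and>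
     (\<forall>a b. wf_over (tgens Ss) a \<longrightarrow> wf_over (tgens Ss) b \<longrightarrow> teq Ss a b \<longrightarrow>
         teq Ts (subst \<sigma> a) (subst \<sigma> b))"

definition Lf :: "'a bvh \<Rightarrow> (nat \<times> 'a bvh, 'k) fexpr" where  \<comment> \<open>g \<otimes> 1\<close>
  "Lf g = Gen (0, g)"

definition Rf :: "'a bvh \<Rightarrow> (nat \<times> 'a bvh, 'k) fexpr" where  \<comment> \<open>1 \<otimes> g\<close>
  "Rf g = Gen (1, g)"

definition caseA :: "'a \<Rightarrow> 'a \<Rightarrow> 'a \<Rightarrow> 'a \<Rightarrow> 'a \<Rightarrow> (nat \<times> 'a bvh, 'k::ring_1) fexpr" where
  "caseA x1 x2 i j k =
     Minus (Lf (Th i j x1)) (Times (Minus (Lf (th i x1)) (Lf (th j x1))) (Rf (th x2 k)))"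

definition caseB :: "'a \<Rightarrow> 'a \<Rightarrow> 'a \<Rightarrow> 'a \<Rightarrow> 'a \<Rightarrow> (nat \<times> 'a bvh, 'k::ring_1) fexpr" where
  "caseB x1 x2 i j k =
     Plus (Rf (Th x2 j k)) (Times (Lf (th i x1)) (Minus (Rf (th x2 j)) (Rf (th x2 k))))"

text \<open>Delta_{I1,I2} on generators, with new symbols x1 = x', x2 = x''.  The remaining cases are
  reduced to the displayed ones by the symmetries (theta_ij = theta_ji, Theta_ijk = Theta_jki).\<close>
fun delta_g :: "'a \<Rightarrow> 'a \<Rightarrow> 'a set \<Rightarrow> 'a set \<Rightarrow> 'a bvh \<Rightarrow> (nat \<times> 'a bvh, 'k::ring_1) fexpr" where
  "delta_g x1 x2 I1 I2 (th i j) =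
     (if i \<in> I1 \<and> j \<in> I1 then Lf (th i j)
      else if i \<in> I2 \<and> j \<in> I2 then Rf (th i j)
      else if i \<in> I1 \<and> j \<in> I2 then Plus (Lf (th i x1)) (Rf (th x2 j))
      else Plus (Lf (th j x1)) (Rf (th x2 i)))"
| "delta_g x1 x2 I1 I2 (Th i j k) =
     (if i \<in> I1 \<and> j \<in> I1 \<and> k \<in> I1 then Lf (Th i j k)
      else if i \<in> I2 \<and> j \<in> I2 \<and> k \<in> I2 then Rf (Th i j k)
      else if i \<in> I1 \<and> j \<in> I1 \<and> k \<in> I2 then caseA x1 x2 i j k
      else if j \<in> I1 \<and> k \<in> I1 \<and> i \<in> I2 then caseA x1 x2 j k i
      else if k \<in> I1 \<and> i \<in> I1 \<and> j \<in> I2 then caseA x1 x2 k i j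
      else if i \<in> I1 \<and> j \<in> I2 \<and> k \<in> I2 then caseB x1 x2 i j k
      else if j \<in> I1 \<and> k \<in> I2 \<and> i \<in> I2 then caseB x1 x2 j k i
      else caseB x1 x2 k i j)"

text \<open>Delta_{I1,I2} : coBVHgra(I1 \<union> I2) \<rightarrow> coBVHgra(I1 + x1) \<otimes> coBVHgra(x2 + I2).\<close>
definition Dlt :: "'a \<Rightarrow> 'a \<Rightarrow> 'a set \<Rightarrow> 'a set \<Rightarrow> nat \<times> 'a bvh \<Rightarrow> (nat \<times> 'a bvh, 'k::ring_1) fexpr" where
  "Dlt x1 x2 I1 I2 = (\<lambda>(m, g). delta_g x1 x2 I1 I2 g)"

definition shiftT :: "nat \<Rightarrow> (nat \<times> 'a bvh, 'k) fexpr \<Rightarrow> (nat \<times> 'a bvh, 'k) fexpr" where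
  "shiftT n = subst (\<lambda>(m, g). Gen (m + n, g))"

definition IdDlt :: "'a \<Rightarrow> 'a \<Rightarrow> 'a set \<Rightarrow> 'a set \<Rightarrow> nat \<times> 'a bvh \<Rightarrow> (nat \<times> 'a bvh, 'k::ring_1) fexpr" where
  "IdDlt x1 x2 I1 I2 = (\<lambda>(m, g). if m = 0 then Gen (0, g) else shiftT 1 (delta_g x1 x2 I1 I2 g))"

definition DltId :: "'a \<Rightarrow> 'a \<Rightarrow> 'a set \<Rightarrow> 'a set \<Rightarrow> nat \<times> 'a bvh \<Rightarrow> (nat \<times> 'a bvh, 'k::ring_1) fexpr" where
  "DltId x1 x2 I1 I2 = (\<lambda>(m, g). if m = 0 then delta_g x1 x2 I1 I2 g else Gen (m + 1, g))"

fun ren :: "('a \<Rightarrow> 'b) \<Rightarrow> 'a bvh \<Rightarrow> 'b bvh" where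
  "ren f (th i j) = th (f i) (f j)"
| "ren f (Th i j k) = Th (f i) (f j) (f k)"

definition renT :: "(nat \<Rightarrow> 'a \<Rightarrow> 'a) \<Rightarrow> nat \<times> 'a bvh \<Rightarrow> (nat \<times> 'a bvh, 'k) fexpr" where
  "renT hs = (\<lambda>(m, g). Gen (m, ren (hs m) g))"

definition fix_pt :: "'a \<Rightarrow> ('a \<Rightarrow> 'a) \<Rightarrow> 'a \<Rightarrow> 'a" where
  "fix_pt x f = (\<lambda>a. if a = x then x else f a)"

end

theory Submission
  imports Defs
begin

context
  fixes od :: "'g \<Rightarrow> bool" and R :: "(('g,'k::field) fexpr \<times> ('g,'k) fexpr) set"
begin

abbreviation ge :: "('g,'k) fexpr \<Rightarrow> ('g,'k) fexpr \<Rightarrow> bool" (infix "\<approx>" 50) where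
  "a \<approx> b \<equiv> gc_eq od R a b"

lemma gtr[trans]: "a \<approx> b \<Longrightarrow> b \<approx> c \<Longrightarrow> a \<approx> c" by (rule gc_trans)
lemma gsym: "a \<approx> b \<Longrightarrow> b \<approx> a" by (rule gc_sym)
lemma grefl: "a \<approx> a" by (rule gc_refl)
lemma pcl: "a \<approx> a' \<Longrightarrow> Plus a b \<approx> Plus a' b" by (simp add: gc_plus_cong gc_refl)
lemma pcr: "b \<approx> b' \<Longrightarrow> Plus a b \<approx> Plus a b'" by (simp add: gc_plus_cong gc_refl)
lemma tcl: "a \<approx> a' \<Longrightarrow> Times a b \<approx> Times a' b" by (simp add: gc_times_cong gc_refl)
lemma tcr: "b \<approx> b' \<Longrightarrow> Times a b \<approx> Times a b'" by (simp add: gc_times_cong gc_refl)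

lemma plus_zero_l: "Plus (Sc 0) a \<approx> a"
  using gc_plus_comm gc_plus_zero gtr by blast

lemma plus_lcomm: "Plus a (Plus b c) \<approx> Plus b (Plus a c)"
proof -
  have "Plus a (Plus b c) \<approx> Plus (Plus a b) c" by (rule gsym, rule gc_plus_assoc)
  also have "\<dots> \<approx> Plus (Plus b a) c" by (rule pcl, rule gc_plus_comm)
  also have "\<dots> \<approx> Plus b (Plus a c)" by (rule gc_plus_assoc)
  finally show ?thesis .
qed

lemma plus_assoc_sym: "Plus a (Plus b c) \<approx> Plus (Plus a b) c"
  by (rule gsym, rule gc_plus_assoc)

lemma times_zero_l: "Times (Sc 0) a \<approx> Sc 0"
proof -
  let ?z = "Times (Sc 0) a"
  have z2: "?z \<approx> Plus ?z ?z"
  proof -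
    have "?z \<approx> Times (Plus (Sc 0) (Sc 0)) a"
      by (rule tcl, rule gsym) (metis gc_sc_plus add_0)
    also have "\<dots> \<approx> Plus ?z ?z" by (rule gc_distrib_r)
    finally show ?thesis .
  qed
  have "Sc 0 \<approx> Plus ?z (Neg ?z)" by (rule gsym, rule gc_plus_neg)
  also have "\<dots> \<approx> Plus (Plus ?z ?z) (Neg ?z)" by (rule pcl, rule z2)
  also have "\<dots> \<approx> Plus ?z (Plus ?z (Neg ?z))" by (rule gc_plus_assoc)
  also have "\<dots> \<approx> Plus ?z (Sc 0)" by (rule pcr, rule gc_plus_neg)
  also have "\<dots> \<approx> ?z" by (rule gc_plus_zero)
  finally show ?thesis by (rule gsym)
qed

lemma times_zero_r: "Times a (Sc 0) \<approx> Sc 0"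
  using gc_sc_central gsym gtr times_zero_l by blast

lemma sc_comb: "Plus (Times (Sc c) x) (Times (Sc d) x) \<approx> Times (Sc (c+d)) x"
proof -
  have "Plus (Times (Sc c) x) (Times (Sc d) x) \<approx> Times (Plus (Sc c) (Sc d)) x"
    by (rule gsym, rule gc_distrib_r)
  also have "\<dots> \<approx> Times (Sc (c+d)) x" by (rule tcl, rule gc_sc_plus)
  finally show ?thesis .
qed

lemma sc_sc: "Times (Sc c) (Times (Sc d) x) \<approx> Times (Sc (c*d)) x"
proof -
  have "Times (Sc c) (Times (Sc d) x) \<approx> Times (Times (Sc c) (Sc d)) x"
    by (rule gsym, rule gc_times_assoc)
  also have "\<dots> \<approx> Times (Sc (c*d)) x" by (rule tcl, rule gc_sc_times)
  finally show ?thesis .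
qed

lemma sc_move: "Times a (Times (Sc s) b) \<approx> Times (Sc s) (Times a b)"
proof -
  have "Times a (Times (Sc s) b) \<approx> Times (Times a (Sc s)) b" by (rule gsym, rule gc_times_assoc)
  also have "\<dots> \<approx> Times (Times (Sc s) a) b" by (rule tcl, rule gsym, rule gc_sc_central)
  also have "\<dots> \<approx> Times (Sc s) (Times a b)" by (rule gc_times_assoc)
  finally show ?thesis .
qed

lemma sc_one: "Times (Sc 1) a \<approx> a" by (rule gc_one_l)

end

fun mono :: "'g list \<Rightarrow> ('g,'k::one) fexpr" where
  "mono [] = Sc 1"
| "mono (g#m) = Times (Gen g) (mono m)"

fun reify :: "('k \<times> 'g list) list \<Rightarrow> ('g,'k::zero_neq_one) fexpr" where
  "reify [] = Sc 0"
| "reify ((c,m)#p) = Plus (Times (Sc c) (mono m)) (reify p)"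

definition mult :: "('k::times \<times> 'g list) list \<Rightarrow> ('k \<times> 'g list) list \<Rightarrow> ('k \<times> 'g list) list" where
  "mult p q = concat (map (\<lambda>(c,m). map (\<lambda>(d,n). (c*d, m@n)) q) p)"

fun norm :: "('g \<Rightarrow> 'k \<times> 'g) \<Rightarrow> ('g,'k::times) fexpr \<Rightarrow> ('k \<times> 'g list) list" where
  "norm cg (Gen g) = [(fst (cg g), [snd (cg g)])]"
| "norm cg (Sc a) = [(a, [])]"
| "norm cg (Plus a b) = norm cg a @ norm cg b"
| "norm cg (Times a b) = mult (norm cg a) (norm cg b)"

definition coeff :: "('k::comm_monoid_add \<times> 'g list) list \<Rightarrow> 'g list \<Rightarrow> 'k" where
  "coeff p m = sum_list (map (\<lambda>(c,n). if n = m then c else 0) p)"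

context
  fixes od :: "'g \<Rightarrow> bool" and R :: "(('g,'k::field) fexpr \<times> ('g,'k) fexpr) set"
begin

notation ge (infix "\<approx>" 50)

lemma mono_app: "gc_eq od R (mono (m@n)) (Times (mono m) (mono n))"
proof (induction m)
  case Nil
  show ?case by (simp, rule gsym, rule gc_one_l)
next
  case (Cons g m)
  have "gc_eq od R (Times (Gen g) (mono (m@n))) (Times (Gen g) (Times (mono m) (mono n)))"
    by (rule tcr, rule Cons)
  also have "gc_eq od R \<dots> (Times (Times (Gen g) (mono m)) (mono n))" by (rule gsym, rule gc_times_assoc)
  finally show ?case by simp
qed

lemma reify_app: "gc_eq od R (reify (p@q)) (Plus (reify p) (reify q))"
proof (induction p)
  case Nil
  show ?case by (simp, rule gsym, rule plus_zero_l)
next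
  case (Cons t p)
  obtain c m where t: "t = (c,m)" by force
  have "gc_eq od R (Plus (Times (Sc c) (mono m)) (reify (p@q)))
          (Plus (Times (Sc c) (mono m)) (Plus (reify p) (reify q)))"
    by (rule pcr, rule Cons)
  also have "gc_eq od R \<dots> (Plus (Plus (Times (Sc c) (mono m)) (reify p)) (reify q))"
    by (rule plus_assoc_sym)
  finally show ?case by (simp add: t)
qed

lemma term_mult: "gc_eq od R (Times (Times (Sc c) (mono m)) (Times (Sc d) (mono n)))
   (Times (Sc (c*d)) (mono (m@n)))"
proof -
  have "gc_eq od R (Times (Times (Sc c) (mono m)) (Times (Sc d) (mono n)))
     (Times (Sc c) (Times (mono m) (Times (Sc d) (mono n))))" by (rule gc_times_assoc)
  also have "gc_eq od R \<dots> (Times (Sc c) (Times (Sc d) (Times (mono m) (mono n))))"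
    by (rule tcr, rule sc_move)
  also have "gc_eq od R \<dots> (Times (Sc (c*d)) (Times (mono m) (mono n)))" by (rule sc_sc)
  also have "gc_eq od R \<dots> (Times (Sc (c*d)) (mono (m@n)))" by (rule tcr, rule gsym, rule mono_app)
  finally show ?thesis .
qed

lemma reify_map: "gc_eq od R (reify (map (\<lambda>(d,n). (c*d, m@n)) q)) (Times (Times (Sc c) (mono m)) (reify q))"
proof (induction q)
  case Nil
  show ?case by (simp, rule gsym, rule times_zero_r)
next
  case (Cons t q)
  obtain d n where t: "t = (d,n)" by force
  let ?X = "Times (Sc c) (mono m)"
  have "gc_eq od R (Plus (Times (Sc (c*d)) (mono (m@n))) (reify (map (\<lambda>(d,n). (c*d, m@n)) q)))
      (Plus (Times ?X (Times (Sc d) (mono n))) (Times ?X (reify q)))"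
    by (rule gc_plus_cong, rule gsym, rule term_mult, rule Cons)
  also have "gc_eq od R \<dots> (Times ?X (Plus (Times (Sc d) (mono n)) (reify q)))"
    by (rule gsym, rule gc_distrib_l)
  finally show ?case by (simp add: t)
qed

lemma reify_mult: "gc_eq od R (reify (mult p q)) (Times (reify p) (reify q))"
proof (induction p)
  case Nil
  show ?case by (simp add: mult_def, rule gsym, rule times_zero_l)
next
  case (Cons t p)
  obtain c m where t: "t = (c,m)" by force
  have "mult (t#p) q = map (\<lambda>(d,n). (c*d, m@n)) q @ mult p q" by (simp add: mult_def t)
  hence "gc_eq od R (reify (mult (t#p) q)) (Plus (reify (map (\<lambda>(d,n). (c*d, m@n)) q)) (reify (mult p q)))"
    using reify_app by simp
  also have "gc_eq od R \<dots> (Plus (Times (Times (Sc c) (mono m)) (reify q)) (Times (reify p) (reify q)))"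
    by (rule gc_plus_cong, rule reify_map, rule Cons)
  also have "gc_eq od R \<dots> (Times (reify (t#p)) (reify q))"
    by (simp add: t, rule gsym, rule gc_distrib_r)
  finally show ?case .
qed

lemma norm_sound:
  assumes "\<forall>g\<in>gens_of e. gc_eq od R (Gen g) (Times (Sc (fst (cg g))) (Gen (snd (cg g))))"
  shows "gc_eq od R e (reify (norm cg e))"
  using assms
proof (induction e)
  case (Gen g)
  have "gc_eq od R (Times (Sc (fst (cg g))) (Gen (snd (cg g))))
     (Plus (Times (Sc (fst (cg g))) (Times (Gen (snd (cg g))) (Sc 1))) (Sc 0))"
    by (rule gsym, rule gtr, rule gc_plus_zero, rule tcr, rule gc_one_r)
  then show ?case using Gen by (auto intro: gtr)
next
  case (Sc a)
  have "gc_eq od R (Sc a) (Plus (Times (Sc a) (Sc 1)) (Sc 0))"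
    by (rule gsym, rule gtr, rule gc_plus_zero, rule gc_one_r)
  then show ?case by simp
next
  case (Plus a b)
  then have "gc_eq od R (Plus a b) (Plus (reify (norm cg a)) (reify (norm cg b)))"
    by (auto intro: gc_plus_cong)
  then show ?case using reify_app gsym gtr by fastforce
next
  case (Times a b)
  then have "gc_eq od R (Times a b) (Times (reify (norm cg a)) (reify (norm cg b)))"
    by (auto intro: gc_times_cong)
  then show ?case using reify_mult gsym gtr by fastforce
qed

definition canon :: "'g list \<Rightarrow> ('g list \<Rightarrow> 'k) \<Rightarrow> 'g list list \<Rightarrow> ('g,'k::field) fexpr" where
  "canon dummy f ms = reify (map (\<lambda>m. (f m, m)) ms)"

lemma canon_zero: "gc_eq od R (reify (map (\<lambda>m. (0, m)) ms)) (Sc 0)"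
proof (induction ms)
  case Nil then show ?case by (simp add: gc_refl)
next
  case (Cons m ms)
  have "gc_eq od R (Plus (Times (Sc 0) (mono m)) (reify (map (\<lambda>m. (0, m)) ms))) (Plus (Sc 0) (Sc 0))"
    by (rule gc_plus_cong, rule times_zero_l, rule Cons)
  also have "gc_eq od R \<dots> (Sc 0)" by (rule gc_plus_zero)
  finally show ?case by simp
qed

lemma add_term:
  assumes "distinct ms" "m \<in> set ms"
  shows "gc_eq od R (Plus (Times (Sc c) (mono m)) (reify (map (\<lambda>m. (f m, m)) ms)))
           (reify (map (\<lambda>n. ((f(m := c + f m)) n, n)) ms))"
  using assms
proof (induction ms)
  case Nil then show ?case by simp
next
  case (Cons n ms)
  show ?case
  proof (cases "n = m")
    case True
    with Cons.prems have nm: "m \<notin> set ms" by simp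
    have eq: "map (\<lambda>n. (if n = m then c + f m else f n, n)) ms = map (\<lambda>m. (f m, m)) ms"
      using nm by (auto intro: map_cong)
    have "gc_eq od R (Plus (Times (Sc c) (mono m)) (Plus (Times (Sc (f m)) (mono m)) (reify (map (\<lambda>m. (f m, m)) ms))))
       (Plus (Plus (Times (Sc c) (mono m)) (Times (Sc (f m)) (mono m))) (reify (map (\<lambda>m. (f m, m)) ms)))"
      by (rule plus_assoc_sym)
    also have "gc_eq od R \<dots> (Plus (Times (Sc (c + f m)) (mono m)) (reify (map (\<lambda>m. (f m, m)) ms)))"
      by (rule pcl, rule sc_comb)
    finally show ?thesis using True by (simp add: eq)
  next
    case False
    with Cons.prems have ms: "distinct ms" "m \<in> set ms" by auto
    let ?T = "Times (Sc c) (mono m)"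
    have "gc_eq od R (Plus ?T (Plus (Times (Sc (f n)) (mono n)) (reify (map (\<lambda>m. (f m, m)) ms))))
      (Plus (Times (Sc (f n)) (mono n)) (Plus ?T (reify (map (\<lambda>m. (f m, m)) ms))))"
      by (rule plus_lcomm)
    also have "gc_eq od R \<dots> (Plus (Times (Sc (f n)) (mono n)) (reify (map (\<lambda>n. ((f(m := c + f m)) n, n)) ms)))"
      by (rule pcr, rule Cons.IH[OF ms])
    finally show ?thesis using False by simp
  qed
qed

lemma coeff_cons: "coeff ((c,m)#p) = (coeff p)(m := c + coeff p m)"
  by (rule ext) (simp add: coeff_def)

lemma reify_canon:
  assumes "set (map snd p) \<subseteq> set ms" "distinct ms"
  shows "gc_eq od R (reify p) (reify (map (\<lambda>m. (coeff p m, m)) ms))"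
  using assms
proof (induction p)
  case Nil
  have "gc_eq od R (Sc 0) (reify (map (\<lambda>m. (0, m)) ms))" by (rule gsym, rule canon_zero)
  then show ?case by (simp add: coeff_def)
next
  case (Cons t p)
  obtain c m where t: "t = (c,m)" by force
  with Cons.prems have m: "m \<in> set ms" and pm: "set (map snd p) \<subseteq> set ms" by auto
  have "gc_eq od R (Plus (Times (Sc c) (mono m)) (reify p))
     (Plus (Times (Sc c) (mono m)) (reify (map (\<lambda>m. (coeff p m, m)) ms)))"
    by (rule pcr, rule Cons.IH[OF pm Cons.prems(2)])
  also have "gc_eq od R \<dots> (reify (map (\<lambda>n. (((coeff p)(m := c + coeff p m)) n, n)) ms))"
    by (rule add_term[OF Cons.prems(2) m])
  finally show ?case by (simp add: t coeff_cons)
qed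

lemma coeff_complete:
  assumes "\<And>m. coeff p m = coeff q m"
  shows "gc_eq od R (reify p) (reify q)"
proof -
  let ?ms = "remdups (map snd (p@q))"
  have "gc_eq od R (reify p) (reify (map (\<lambda>m. (coeff p m, m)) ?ms))"
    by (rule reify_canon) auto
  also have "map (\<lambda>m. (coeff p m, m)) ?ms = map (\<lambda>m. (coeff q m, m)) ?ms" using assms by simp
  also have "gc_eq od R (reify (map (\<lambda>m. (coeff q m, m)) ?ms)) (reify q)"
    by (rule gsym, rule reify_canon) auto
  finally show ?thesis .
qed

lemma norm_eq:
  assumes "\<forall>g\<in>gens_of a \<union> gens_of b. gc_eq od R (Gen g) (Times (Sc (fst (cg g))) (Gen (snd (cg g))))"
    and "\<And>m. coeff (norm cg a) m = coeff (norm cg b) m"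
  shows "gc_eq od R a b"
proof -
  have "gc_eq od R a (reify (norm cg a))" by (rule norm_sound) (use assms in auto)
  also have "gc_eq od R \<dots> (reify (norm cg b))" by (rule coeff_complete, rule assms(2))
  also have "gc_eq od R \<dots> b" by (rule gsym, rule norm_sound) (use assms in auto)
  finally show ?thesis .
qed

end

lemma id_cg: "\<forall>g\<in>S. gc_eq od R (Gen g) (Times (Sc (fst ((\<lambda>g. (1::'k::field, g)) g))) (Gen (snd ((\<lambda>g. (1::'k, g)) g))))"
  by (auto intro: gc_sym gc_one_l)

lemma caseA_swap:
  assumes "gc_eq od R (Lf (Th p q x1)) (Neg (Lf (Th q p x1)))"
  shows "gc_eq od R (caseA x1 x2 p q r :: (nat \<times> 'a bvh, 'k::field) fexpr) (Neg (caseA x1 x2 q p r))"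
proof -
  have "gc_eq od R (caseA x1 x2 p q r :: (nat \<times> 'a bvh, 'k::field) fexpr)
     (Minus (Neg (Lf (Th q p x1))) (Times (Minus (Lf (th p x1)) (Lf (th q x1))) (Rf (th x2 r))))"
    unfolding caseA_def by (rule pcl, rule assms)
  also have "gc_eq od R \<dots> (Neg (caseA x1 x2 q p r))"
    apply (rule norm_eq[where cg = "\<lambda>g. (1, g)"])
     apply (rule id_cg)
    apply (simp add: caseA_def Lf_def Rf_def mult_def coeff_def)
    done
  finally show ?thesis .
qed

definition sg :: "nat \<Rightarrow> nat \<Rightarrow> 'k::field" where
  "sg n m = (if odd n \<and> odd m then -1 else 1)"

lemma sg_add1: "sg (n1+n2) m = (sg n1 m * sg n2 m :: 'k::field)"
  by (auto simp: sg_def)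
lemma sg_add2: "sg d (n1+n2) = (sg d n1 * sg d n2 :: 'k::field)"
  by (auto simp: sg_def)
lemma sg_0: "sg n 0 = 1" "sg 0 n = 1" by (auto simp: sg_def)

context
  fixes od :: "'g \<Rightarrow> bool" and R :: "(('g,'k::field) fexpr \<times> ('g,'k) fexpr) set"
    and dg :: "'g \<Rightarrow> nat"
  assumes oddeg: "\<And>g. od g = odd (dg g)"
begin

abbreviation ge2 :: "('g,'k) fexpr \<Rightarrow> ('g,'k) fexpr \<Rightarrow> bool" (infix "\<approx>" 50) where
  "a \<approx> b \<equiv> gc_eq od R a b"

lemma zz: "x \<approx> Sc 0 \<Longrightarrow> y \<approx> Sc 0 \<Longrightarrow> x \<approx> y"
  using gsym gtr by blast

lemma sc_zero: "Times (Sc s) (Sc 0) \<approx> Sc 0" by (rule times_zero_r)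

lemma sc_plus: "Plus (Times (Sc s) a) (Times (Sc s) b) \<approx> Times (Sc s) (Plus a b)"
  by (rule gsym, rule gc_distrib_l)

lemma one_sym: "a \<approx> Times (Sc 1) a" by (rule gsym, rule gc_one_l)

lemma gen_comm_h:
  assumes "homog dg f m"
  shows "Times (Gen g) f \<approx> Times (Sc (sg (dg g) m)) (Times f (Gen g))"
  using assms
proof (induction rule: homog.induct)
  case (homog_gen h)
  have eq: "(if od g \<and> od h then -1 else 1) = (sg (dg g) (dg h) :: 'k)" by (simp add: sg_def oddeg)
  show ?case using gc_gen_comm[of od R g h] unfolding eq .
next
  case (homog_sc a)
  have "Times (Gen g) (Sc a) \<approx> Times (Sc a) (Gen g)" by (rule gsym, rule gc_sc_central)
  also have "\<dots> \<approx> Times (Sc 1) (Times (Sc a) (Gen g))" by (rule one_sym)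
  finally show ?case by (simp add: sg_0)
next
  case (homog_zero n)
  show ?case
    by (rule zz, rule times_zero_r, rule gtr, rule tcr, rule times_zero_l, rule times_zero_r)
next
  case (homog_plus a n b)
  let ?s = "Sc (sg (dg g) n)"
  have "Times (Gen g) (Plus a b) \<approx> Plus (Times (Gen g) a) (Times (Gen g) b)" by (rule gc_distrib_l)
  also have "\<dots> \<approx> Plus (Times ?s (Times a (Gen g))) (Times ?s (Times b (Gen g)))"
    by (rule gc_plus_cong, rule homog_plus.IH(1), rule homog_plus.IH(2))
  also have "\<dots> \<approx> Times ?s (Plus (Times a (Gen g)) (Times b (Gen g)))" by (rule sc_plus)
  also have "\<dots> \<approx> Times ?s (Times (Plus a b) (Gen g))" by (rule tcr, rule gsym, rule gc_distrib_r)
  finally show ?case .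
next
  case (homog_times a n b m)
  let ?s1 = "sg (dg g) n" and ?s2 = "sg (dg g) m"
  have "Times (Gen g) (Times a b) \<approx> Times (Times (Gen g) a) b" by (rule gsym, rule gc_times_assoc)
  also have "\<dots> \<approx> Times (Times (Sc ?s1) (Times a (Gen g))) b" by (rule tcl, rule homog_times.IH(1))
  also have "\<dots> \<approx> Times (Sc ?s1) (Times (Times a (Gen g)) b)" by (rule gc_times_assoc)
  also have "\<dots> \<approx> Times (Sc ?s1) (Times a (Times (Gen g) b))" by (rule tcr, rule gc_times_assoc)
  also have "\<dots> \<approx> Times (Sc ?s1) (Times a (Times (Sc ?s2) (Times b (Gen g))))"
    by (rule tcr, rule tcr, rule homog_times.IH(2))
  also have "\<dots> \<approx> Times (Sc ?s1) (Times (Sc ?s2) (Times a (Times b (Gen g))))"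
    by (rule tcr, rule sc_move)
  also have "\<dots> \<approx> Times (Sc (?s1 * ?s2)) (Times a (Times b (Gen g)))" by (rule sc_sc)
  also have "\<dots> \<approx> Times (Sc (?s1 * ?s2)) (Times (Times a b) (Gen g))"
    by (rule tcr, rule gsym, rule gc_times_assoc)
  finally show ?case by (simp add: sg_add2)
qed

lemma gcomm:
  assumes "homog dg e n" "homog dg f m"
  shows "Times e f \<approx> Times (Sc (sg n m)) (Times f e)"
  using assms(1)
proof (induction rule: homog.induct)
  case (homog_gen g)
  show ?case by (rule gen_comm_h, rule assms(2))
next
  case (homog_sc a)
  have "Times (Sc a) f \<approx> Times f (Sc a)" by (rule gc_sc_central)
  also have "\<dots> \<approx> Times (Sc 1) (Times f (Sc a))" by (rule one_sym)
  finally show ?case by (simp add: sg_0)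
next
  case (homog_zero n)
  show ?case
    by (rule zz, rule times_zero_l, rule gtr, rule tcr, rule times_zero_r, rule times_zero_r)
next
  case (homog_plus a n b)
  let ?s = "Sc (sg n m)"
  have "Times (Plus a b) f \<approx> Plus (Times a f) (Times b f)" by (rule gc_distrib_r)
  also have "\<dots> \<approx> Plus (Times ?s (Times f a)) (Times ?s (Times f b))"
    by (rule gc_plus_cong, rule homog_plus.IH(1), rule homog_plus.IH(2))
  also have "\<dots> \<approx> Times ?s (Plus (Times f a) (Times f b))" by (rule sc_plus)
  also have "\<dots> \<approx> Times ?s (Times f (Plus a b))" by (rule tcr, rule gsym, rule gc_distrib_l)
  finally show ?case .
next
  case (homog_times a n1 b n2)
  let ?s1 = "sg n1 m" and ?s2 = "sg n2 m"
  have "Times (Times a b) f \<approx> Times a (Times b f)" by (rule gc_times_assoc)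
  also have "\<dots> \<approx> Times a (Times (Sc ?s2) (Times f b))" by (rule tcr, rule homog_times.IH(2))
  also have "\<dots> \<approx> Times (Sc ?s2) (Times a (Times f b))" by (rule sc_move)
  also have "\<dots> \<approx> Times (Sc ?s2) (Times (Times a f) b)" by (rule tcr, rule gsym, rule gc_times_assoc)
  also have "\<dots> \<approx> Times (Sc ?s2) (Times (Times (Sc ?s1) (Times f a)) b)"
    by (rule tcr, rule tcl, rule homog_times.IH(1))
  also have "\<dots> \<approx> Times (Sc ?s2) (Times (Sc ?s1) (Times (Times f a) b))"
    by (rule tcr, rule gc_times_assoc)
  also have "\<dots> \<approx> Times (Sc (?s2 * ?s1)) (Times (Times f a) b)" by (rule sc_sc)
  also have "\<dots> \<approx> Times (Sc (?s2 * ?s1)) (Times f (Times a b))" by (rule tcr, rule gc_times_assoc)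
  finally show ?case by (simp add: sg_add1 mult.commute)
qed

end

definition odt :: "nat \<times> 'a bvh \<Rightarrow> bool" where "odt = (\<lambda>(m, g). odd (bdeg g))"

lemma teq_odt: "teq Ts = gc_eq odt (trels Ts)" by (simp add: teq_def odt_def)

lemma odt_tdeg: "odt g = odd (tdeg g)" by (cases g) (simp add: odt_def tdeg_def)

lemma hgen: "tdeg g = n \<Longrightarrow> homog tdeg (Gen g) n" using homog_gen by metis
lemma htimes: "homog dg a n \<Longrightarrow> homog dg b m \<Longrightarrow> k = n + m \<Longrightarrow> homog dg (Times a b) k"
  using homog_times by metis
lemma hneg: "homog dg a n \<Longrightarrow> homog dg (Neg a) n"
  by (rule htimes[OF homog_sc], auto)

lemma hif: "homog dg a n \<Longrightarrow> homog dg b n \<Longrightarrow> homog dg (if P then a else b) n" by simp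
lemma t1: "homog tdeg (Gen (m, th a b)) 1" by (rule hgen) (simp add: tdeg_def)
lemma t2: "homog tdeg (Gen (m, Th a b c)) 2" by (rule hgen) (simp add: tdeg_def)
lemma t11: "homog dg a 1 \<Longrightarrow> homog dg b 1 \<Longrightarrow> homog dg (Times a b) 2"
  using homog_times[of dg a 1 b 1] by (simp add: numeral_2_eq_2)
lemma t1s: "homog tdeg (Gen (m, th a b)) (Suc 0)" using t1 by simp
lemma t1p: "homog tdeg (Plus (Gen (m, th a b)) (Gen (m', th c d))) (Suc 0)" by (rule homog_plus; rule t1s)

lemma delta_homog: "homog tdeg (delta_g x1 x2 I1 I2 g :: (nat \<times> 'a bvh, 'k::field) fexpr) (bdeg g)"
proof -
  have A: "homog tdeg (caseA x1 x2 i j k :: (nat \<times> 'a bvh, 'k::field) fexpr) 2" for i j k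
    unfolding caseA_def Lf_def Rf_def
    by (rule homog_plus[OF t2 hneg[OF t11[OF homog_plus[OF t1 hneg[OF t1]] t1]]])
  have B: "homog tdeg (caseB x1 x2 i j k :: (nat \<times> 'a bvh, 'k::field) fexpr) 2" for i j k
    unfolding caseB_def Lf_def Rf_def
    by (rule homog_plus[OF t2 t11[OF t1 homog_plus[OF t1 hneg[OF t1]]]])
  show ?thesis
  proof (cases g)
    case (th i j)
    show ?thesis unfolding th delta_g.simps bdeg.simps
      by (intro hif) (simp_all only: Lf_def Rf_def t1 homog_plus)
  next
    case (Th i j k)
    show ?thesis unfolding Th delta_g.simps bdeg.simps
      by (intro hif) (simp_all only: Lf_def Rf_def t2 A B)
  qed
qed

context
  fixes I1 I2 :: "'a set" and x1 x2 :: 'a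
  assumes disj: "I1 \<inter> I2 = {}" and x1n: "x1 \<notin> I1 \<union> I2" and x2n: "x2 \<notin> I1 \<union> I2"
    and x12: "x1 \<noteq> x2"
begin

abbreviation G :: "(nat \<times> 'a bvh, 'k::field) fexpr \<Rightarrow> (nat \<times> 'a bvh, 'k) fexpr \<Rightarrow> bool" where
  "G \<equiv> gc_eq odt (trels [insert x1 I1, insert x2 I2])"

lemma swapA:
  assumes "p \<in> I1" "q \<in> I1"
  shows "G (caseA x1 x2 p q r) (Neg (caseA x1 x2 q p r))"
proof (rule caseA_swap, rule gc_rel)
  show "(Lf (Th p q x1), Neg (Lf (Th q p x1))) \<in> trels [insert x1 I1, insert x2 I2]"
    using assms by (auto simp: trels_def Lf_def)
qed

lemma caseB_swap:
  assumes "gc_eq od R (Rf (Th x2 q r)) (Neg (Rf (Th x2 r q)))"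
  shows "gc_eq od R (caseB x1 x2 p q r :: (nat \<times> 'a bvh, 'k::field) fexpr) (Neg (caseB x1 x2 p r q))"
proof -
  have "gc_eq od R (caseB x1 x2 p q r :: (nat \<times> 'a bvh, 'k::field) fexpr)
     (Plus (Neg (Rf (Th x2 r q))) (Times (Lf (th p x1)) (Minus (Rf (th x2 q)) (Rf (th x2 r)))))"
    unfolding caseB_def by (rule pcl, rule assms)
  also have "gc_eq od R \<dots> (Neg (caseB x1 x2 p r q))"
    apply (rule norm_eq[where cg = "\<lambda>g. (1, g)"])
     apply (rule id_cg)
    apply (simp add: caseB_def Lf_def Rf_def mult_def coeff_def)
    done
  finally show ?thesis .
qed

lemma swapB:
  assumes "q \<in> I2" "r \<in> I2"
  shows "G (caseB x1 x2 p q r) (Neg (caseB x1 x2 p r q))"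
proof (rule caseB_swap, rule gc_rel)
  show "(Rf (Th x2 q r), Neg (Rf (Th x2 r q))) \<in> trels [insert x1 I1, insert x2 I2]"
    using assms by (auto simp: trels_def Rf_def)
qed

lemma relL: "i \<in> I1 \<Longrightarrow> j \<in> I1 \<Longrightarrow> k \<in> I1 \<Longrightarrow> G (Lf (Th i j k)) (Neg (Lf (Th j i k)))"
  by (rule gc_rel) (auto simp: trels_def Lf_def)
lemma relL2: "i \<in> I1 \<Longrightarrow> j \<in> I1 \<Longrightarrow> k \<in> I1 \<Longrightarrow> G (Lf (Th i j k)) (Neg (Lf (Th i k j)))"
  by (rule gc_rel) (auto simp: trels_def Lf_def)
lemma relR: "i \<in> I2 \<Longrightarrow> j \<in> I2 \<Longrightarrow> k \<in> I2 \<Longrightarrow> G (Rf (Th i j k)) (Neg (Rf (Th j i k)))"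
  by (rule gc_rel) (auto simp: trels_def Rf_def)
lemma relR2: "i \<in> I2 \<Longrightarrow> j \<in> I2 \<Longrightarrow> k \<in> I2 \<Longrightarrow> G (Rf (Th i j k)) (Neg (Rf (Th i k j)))"
  by (rule gc_rel) (auto simp: trels_def Rf_def)
lemma relLt: "i \<in> I1 \<Longrightarrow> j \<in> I1 \<Longrightarrow> i \<noteq> j \<Longrightarrow> G (Lf (th i j)) (Lf (th j i))"
  by (rule gc_rel) (auto simp: trels_def Lf_def)
lemma relRt: "i \<in> I2 \<Longrightarrow> j \<in> I2 \<Longrightarrow> i \<noteq> j \<Longrightarrow> G (Rf (th i j)) (Rf (th j i))"
  by (rule gc_rel) (auto simp: trels_def Rf_def)

lemma mem_cases: "i \<in> I1 \<union> I2 \<Longrightarrow> (i \<in> I1 \<and> i \<notin> I2) \<or> (i \<in> I2 \<and> i \<notin> I1)"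
  using disj by blast

lemma rel_th: "i \<in> I1 \<union> I2 \<Longrightarrow> j \<in> I1 \<union> I2 \<Longrightarrow> i \<noteq> j \<Longrightarrow>
   G (delta_g x1 x2 I1 I2 (th i j)) (delta_g x1 x2 I1 I2 (th j i))"
  apply (frule mem_cases[of i], drule mem_cases[of j])
  by (elim disjE conjE; simp add: relLt relRt gc_refl)

lemma rel_Th1: "i \<in> I1 \<union> I2 \<Longrightarrow> j \<in> I1 \<union> I2 \<Longrightarrow> k \<in> I1 \<union> I2 \<Longrightarrow>
   G (delta_g x1 x2 I1 I2 (Th i j k)) (Neg (delta_g x1 x2 I1 I2 (Th j i k)))"
  apply (drule mem_cases[of i], drule mem_cases[of j], drule mem_cases[of k])
  by (elim disjE conjE; simp add: relL relR swapA swapB)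

lemma rel_Th2: "i \<in> I1 \<union> I2 \<Longrightarrow> j \<in> I1 \<union> I2 \<Longrightarrow> k \<in> I1 \<union> I2 \<Longrightarrow>
   G (delta_g x1 x2 I1 I2 (Th i j k)) (Neg (delta_g x1 x2 I1 I2 (Th i k j)))"
  apply (drule mem_cases[of i], drule mem_cases[of j], drule mem_cases[of k])
  by (elim disjE conjE; simp add: relL2 relR2 swapA swapB)

lemma bvh_th: "th a b \<in> bvh_gens S \<longleftrightarrow> a \<in> S \<and> b \<in> S \<and> a \<noteq> b"
  by (auto simp: bvh_gens_def)
lemma bvh_Th: "Th a b c \<in> bvh_gens S \<longleftrightarrow> a \<in> S \<and> b \<in> S \<and> c \<in> S"
  by (auto simp: bvh_gens_def)
lemma tg0: "(0, g) \<in> tgens [A, B] \<longleftrightarrow> g \<in> bvh_gens A" by (simp add: tgens_def)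
lemma tg1: "(Suc 0, g) \<in> tgens [A, B] \<longleftrightarrow> g \<in> bvh_gens B" by (simp add: tgens_def)

lemma wf_delta:
  assumes "g \<in> bvh_gens (I1 \<union> I2)"
  shows "gens_of (delta_g x1 x2 I1 I2 g :: (nat \<times> 'a bvh, 'k::field) fexpr) \<subseteq> tgens [insert x1 I1, insert x2 I2]"
proof (cases g)
  case (th i j)
  with assms have ij: "i \<in> I1 \<union> I2" "j \<in> I1 \<union> I2" "i \<noteq> j" by (auto simp: bvh_gens_def)
  have ne: "i \<noteq> x1" "x1 \<noteq> i" "i \<noteq> x2" "x2 \<noteq> i" "j \<noteq> x1" "x1 \<noteq> j" "j \<noteq> x2" "x2 \<noteq> j"
    using ij x1n x2n by auto
  show ?thesis using mem_cases[OF ij(1)] mem_cases[OF ij(2)]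
    unfolding th by (elim disjE conjE; simp add: ij ne tg0 tg1 bvh_th bvh_Th Lf_def Rf_def)
next
  case (Th i j k)
  with assms have ij: "i \<in> I1 \<union> I2" "j \<in> I1 \<union> I2" "k \<in> I1 \<union> I2" by (auto simp: bvh_gens_def)
  have ne: "i \<noteq> x1" "x1 \<noteq> i" "i \<noteq> x2" "x2 \<noteq> i" "j \<noteq> x1" "x1 \<noteq> j" "j \<noteq> x2" "x2 \<noteq> j"
     "k \<noteq> x1" "x1 \<noteq> k" "k \<noteq> x2" "x2 \<noteq> k"
    using ij x1n x2n by auto
  show ?thesis using mem_cases[OF ij(1)] mem_cases[OF ij(2)] mem_cases[OF ij(3)]
    unfolding Th by (elim disjE conjE; simp add: ij ne tg0 tg1 bvh_th bvh_Th Lf_def Rf_def caseA_def caseB_def)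
qed

lemma morph:
  assumes "gc_eq (\<lambda>(m, g). odd (bdeg g)) (trels [I1 \<union> I2]) a b"
  shows "G (subst (Dlt x1 x2 I1 I2) a) (subst (Dlt x1 x2 I1 I2) b)"
  using assms
proof (induction rule: gc_eq.induct)
  case (gc_refl a) then show ?case by (rule gc_eq.intros)
next
  case (gc_sym a b) then show ?case using gc_eq.gc_sym by blast
next
  case (gc_trans a b c) then show ?case using gc_eq.gc_trans by blast
next
  case (gc_plus_cong a a' b b') then show ?case by (simp add: gc_eq.gc_plus_cong)
next
  case (gc_times_cong a a' b b') then show ?case by (simp add: gc_eq.gc_times_cong)
next
  case (gc_plus_assoc a b c) then show ?case by (simp add: gc_eq.gc_plus_assoc)
next
  case (gc_plus_comm a b) then show ?case by (simp add: gc_eq.gc_plus_comm)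
next
  case (gc_plus_zero a) then show ?case by (simp add: gc_eq.gc_plus_zero)
next
  case (gc_plus_neg a) then show ?case using gc_eq.gc_plus_neg by simp
next
  case (gc_times_assoc a b c) then show ?case by (simp add: gc_eq.gc_times_assoc)
next
  case (gc_one_l a) then show ?case using gc_eq.gc_one_l by simp
next
  case (gc_one_r a) then show ?case using gc_eq.gc_one_r by simp
next
  case (gc_distrib_l a b c) then show ?case by (simp add: gc_eq.gc_distrib_l)
next
  case (gc_distrib_r a b c) then show ?case by (simp add: gc_eq.gc_distrib_r)
next
  case (gc_sc_plus x y) then show ?case by (simp add: gc_eq.gc_sc_plus)
next
  case (gc_sc_times x y) then show ?case by (simp add: gc_eq.gc_sc_times)
next
  case (gc_sc_central x a) then show ?case by (simp add: gc_eq.gc_sc_central)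
next
  case (gc_gen_comm g h)
  obtain m1 g1 where g: "g = (m1, g1)" by force
  obtain m2 h1 where h: "h = (m2, h1)" by force
  have "G (Times (delta_g x1 x2 I1 I2 g1) (delta_g x1 x2 I1 I2 h1))
     (Times (Sc (sg (bdeg g1) (bdeg h1))) (Times (delta_g x1 x2 I1 I2 h1) (delta_g x1 x2 I1 I2 g1)))"
    by (rule gcomm[OF odt_tdeg delta_homog delta_homog])
  then show ?case by (simp add: g h Dlt_def sg_def)
next
  case (gc_rel a b)
  from gc_rel.hyps have "(\<exists>i j. a = Gen (0, th i j) \<and> b = Gen (0, th j i) \<and> i \<in> I1 \<union> I2 \<and> j \<in> I1 \<union> I2 \<and> i \<noteq> j)
    \<or> (\<exists>i j k. a = Gen (0, Th i j k) \<and> b = Neg (Gen (0, Th j i k)) \<and> i \<in> I1 \<union> I2 \<and> j \<in> I1 \<union> I2 \<and> k \<in> I1 \<union> I2)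
    \<or> (\<exists>i j k. a = Gen (0, Th i j k) \<and> b = Neg (Gen (0, Th i k j)) \<and> i \<in> I1 \<union> I2 \<and> j \<in> I1 \<union> I2 \<and> k \<in> I1 \<union> I2)"
    unfolding trels_def by auto
  then show ?case
  proof (elim disjE exE conjE)
    fix i j assume A: "a = Gen (0, th i j)" "b = Gen (0, th j i)" and M: "i \<in> I1 \<union> I2" "j \<in> I1 \<union> I2" "i \<noteq> j"
    show ?thesis unfolding A by (simp only: subst.simps Dlt_def split, rule rel_th[OF M])
  next
    fix i j k assume A: "a = Gen (0, Th i j k)" "b = Neg (Gen (0, Th j i k))" and M: "i \<in> I1 \<union> I2" "j \<in> I1 \<union> I2" "k \<in> I1 \<union> I2"
    show ?thesis unfolding A by (simp only: subst.simps Dlt_def split, rule rel_Th1[OF M])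
  next
    fix i j k assume A: "a = Gen (0, Th i j k)" "b = Neg (Gen (0, Th i k j))" and M: "i \<in> I1 \<union> I2" "j \<in> I1 \<union> I2" "k \<in> I1 \<union> I2"
    show ?thesis unfolding A by (simp only: subst.simps Dlt_def split, rule rel_Th2[OF M])
  qed
qed

lemma part1: "is_tmorph [I1 \<union> I2] [insert x1 I1, insert x2 I2] (Dlt x1 x2 I1 I2 :: _ \<Rightarrow> (_, 'k::field) fexpr)"
  unfolding is_tmorph_def
proof (intro conjI ballI allI impI)
  fix g :: "nat \<times> 'a bvh" assume "g \<in> tgens [I1 \<union> I2]"
  then obtain m g' where g: "g = (m, g')" "g' \<in> bvh_gens (I1 \<union> I2)" by (auto simp: tgens_def)
  have w: "wf_over (tgens [insert x1 I1, insert x2 I2]) (Dlt x1 x2 I1 I2 g :: (_, 'k) fexpr)"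
    unfolding wf_over_def g Dlt_def using wf_delta[OF g(2)] by simp
  show "wf_over (tgens [insert x1 I1, insert x2 I2]) (Dlt x1 x2 I1 I2 g :: (_, 'k) fexpr)" by (rule w)
  have h: "homog tdeg (Dlt x1 x2 I1 I2 g :: (_, 'k) fexpr) (tdeg g)"
    unfolding g Dlt_def tdeg_def using delta_homog[of x1 x2 I1 I2 g'] by (simp add: tdeg_def)
  show "\<exists>e. wf_over (tgens [insert x1 I1, insert x2 I2]) e \<and>
          teq [insert x1 I1, insert x2 I2] (Dlt x1 x2 I1 I2 g :: (_, 'k) fexpr) e \<and> homog tdeg e (tdeg g)"
    using w h by (auto simp: teq_def intro: gc_refl)
next
  fix a b :: "(nat \<times> 'a bvh, 'k) fexpr"
  assume "teq [I1 \<union> I2] a b"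
  then have "G (subst (Dlt x1 x2 I1 I2) a) (subst (Dlt x1 x2 I1 I2) b)"
    unfolding teq_def by (rule morph)
  then show "teq [insert x1 I1, insert x2 I2] (subst (Dlt x1 x2 I1 I2) a) (subst (Dlt x1 x2 I1 I2) b)"
    by (simp add: teq_def odt_def)
qed

end

lemma subst_subst: "subst \<sigma> (subst \<tau> e) = subst (\<lambda>g. subst \<sigma> (\<tau> g)) e"
  by (induction e) auto

lemma subst_cong: "(\<And>g. g \<in> gens_of e \<Longrightarrow> \<sigma> g = \<tau> g) \<Longrightarrow> subst \<sigma> e = subst \<tau> e"
  by (induction e) auto

lemma nat_gen:
  fixes f :: "'a \<Rightarrow> 'a"
  assumes disj: "I1 \<inter> I2 = {}" and inj: "inj_on f (I1 \<union> I2)"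
    and x1n: "x1 \<notin> I1 \<union> I2" and x2n: "x2 \<notin> I1 \<union> I2"
    and g: "g \<in> bvh_gens (I1 \<union> I2)"
  shows "(delta_g x1 x2 (f ` I1) (f ` I2) (ren f g) :: (nat \<times> 'a bvh, 'k::field) fexpr)
     = subst (renT (\<lambda>m. if m = 0 then fix_pt x1 f else fix_pt x2 f)) (delta_g x1 x2 I1 I2 g)"
proof -
  have mc: "(f i \<in> f ` I1 \<and> f i \<notin> f ` I2 \<and> i \<in> I1 \<and> i \<notin> I2 \<or> f i \<in> f ` I2 \<and> f i \<notin> f ` I1 \<and> i \<in> I2 \<and> i \<notin> I1)
     \<and> fix_pt x1 f i = f i \<and> fix_pt x2 f i = f i" if "i \<in> I1 \<union> I2" for i
  proof -
    have "i \<noteq> x1" "i \<noteq> x2" using that x1n x2n by auto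
    moreover have "f i \<in> f ` I1 \<longleftrightarrow> i \<in> I1" "f i \<in> f ` I2 \<longleftrightarrow> i \<in> I2"
      using inj that by (auto simp: inj_on_def)
    ultimately show ?thesis using that disj by (auto simp: fix_pt_def)
  qed
  have fx: "fix_pt x1 f x1 = x1" "fix_pt x2 f x2 = x2" by (auto simp: fix_pt_def)
  show ?thesis
  proof (cases g)
    case (th i j)
    with g have ij: "i \<in> I1 \<union> I2" "j \<in> I1 \<union> I2" by (auto simp: bvh_gens_def)
    show ?thesis using mc[OF ij(1)] mc[OF ij(2)] unfolding th
      by (elim disjE conjE; simp add: fx Lf_def Rf_def renT_def)
  next
    case (Th i j k)
    with g have ij: "i \<in> I1 \<union> I2" "j \<in> I1 \<union> I2" "k \<in> I1 \<union> I2" by (auto simp: bvh_gens_def)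
    show ?thesis using mc[OF ij(1)] mc[OF ij(2)] mc[OF ij(3)] unfolding Th
      by (elim disjE conjE; simp add: fx Lf_def Rf_def renT_def caseA_def caseB_def)
  qed
qed

lemma part2:
  fixes f :: "'a \<Rightarrow> 'a"
  assumes disj: "I1 \<inter> I2 = {}" and inj: "inj_on f (I1 \<union> I2)"
    and x1n: "x1 \<notin> I1 \<union> I2" and x2n: "x2 \<notin> I1 \<union> I2"
    and e: "wf_over (tgens [I1 \<union> I2]) e"
  shows "teq [insert x1 (f ` I1), insert x2 (f ` I2)]
            (subst (Dlt x1 x2 (f ` I1) (f ` I2)) (subst (renT (\<lambda>_. f)) e) :: (nat \<times> 'a bvh, 'k::field) fexpr)
            (subst (renT (\<lambda>m. if m = 0 then fix_pt x1 f else fix_pt x2 f))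
               (subst (Dlt x1 x2 I1 I2) e))"
proof -
  have "subst (Dlt x1 x2 (f ` I1) (f ` I2)) (subst (renT (\<lambda>_. f)) e) =
        (subst (renT (\<lambda>m. if m = 0 then fix_pt x1 f else fix_pt x2 f))
               (subst (Dlt x1 x2 I1 I2) e) :: (nat \<times> 'a bvh, 'k::field) fexpr)"
    unfolding subst_subst
  proof (rule subst_cong)
    fix g assume "g \<in> gens_of e"
    with e obtain g' where g: "g = (0, g')" "g' \<in> bvh_gens (I1 \<union> I2)"
      by (auto simp: wf_over_def tgens_def)
    show "subst (Dlt x1 x2 (f ` I1) (f ` I2)) (renT (\<lambda>_. f) g) =
       (subst (renT (\<lambda>m. if m = 0 then fix_pt x1 f else fix_pt x2 f)) (Dlt x1 x2 I1 I2 g) :: (nat \<times> 'a bvh, 'k::field) fexpr)"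
      using nat_gen[OF disj inj x1n x2n g(2)] by (simp add: g renT_def Dlt_def)
  qed
  then show ?thesis by (simp add: teq_def gc_refl)
qed


lemma subst_cong_gc:
  "(\<And>g. g \<in> gens_of e \<Longrightarrow> gc_eq od R (\<sigma> g) (\<tau> g)) \<Longrightarrow> gc_eq od R (subst \<sigma> e) (subst \<tau> e)"
  by (induction e) (auto intro: gc_eq.intros)

context
  fixes I1 I2 I3 :: "'a set" and x1 x2 y1 y2 :: 'a
  assumes d12: "I1 \<inter> I2 = {}" and d13: "I1 \<inter> I3 = {}" and d23: "I2 \<inter> I3 = {}"
    and dist: "distinct [x1, x2, y1, y2]" and out: "set [x1, x2, y1, y2] \<inter> (I1 \<union> I2 \<union> I3) = {}"
begin

abbreviation T3 where "T3 \<equiv> [insert x1 I1, insert x2 (insert y1 I2), insert y2 I3]"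

abbreviation G3 :: "(nat \<times> 'a bvh, 'k::field) fexpr \<Rightarrow> (nat \<times> 'a bvh, 'k) fexpr \<Rightarrow> bool" where
  "G3 \<equiv> gc_eq odt (trels T3)"

definition cg3 :: "nat \<times> 'a bvh \<Rightarrow> 'k::field \<times> (nat \<times> 'a bvh)" where
  "cg3 g = (case g of (m, Th p q r) \<Rightarrow> if m = 1 \<and> p = x2 \<and> q = y1 \<and> r \<in> I2 then (1, (1, Th r x2 y1)) else (1, g)
                   | _ \<Rightarrow> (1, g))"

lemma cg3_other: "\<not> (\<exists>r. g = (1, Th x2 y1 r) \<and> r \<in> I2) \<Longrightarrow> cg3 g = (1, g)"
  by (auto simp: cg3_def split: prod.split bvh.split)

lemma cg3_valid: "\<forall>g\<in>S. G3 (Gen g) (Times (Sc (fst (cg3 g :: 'k::field \<times> _))) (Gen (snd (cg3 g))))"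
proof
  fix g :: "nat \<times> 'a bvh"
  show "G3 (Gen g) (Times (Sc (fst (cg3 g))) (Gen (snd (cg3 g))))"
  proof (cases "\<exists>r. g = (1, Th x2 y1 r) \<and> r \<in> I2")
    case True
    then obtain r where g: "g = (1, Th x2 y1 r)" "r \<in> I2" by blast
    have "G3 (Gen (1, Th x2 y1 r)) (Neg (Gen (1, Th y1 x2 r)))"
      by (rule gc_rel) (use g in \<open>auto simp: trels_def\<close>)
    also have "G3 (Neg (Gen (1, Th y1 x2 r))) (Neg (Neg (Gen (1, Th y1 r x2))))"
      by (rule tcr, rule gc_rel) (use g in \<open>auto simp: trels_def\<close>)
    also have "G3 (Neg (Neg (Gen (1, Th y1 r x2)))) (Neg (Neg (Neg (Gen (1, Th r y1 x2)))))"
      by (rule tcr, rule tcr, rule gc_rel) (use g in \<open>auto simp: trels_def\<close>)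
    also have "G3 (Neg (Neg (Neg (Gen (1, Th r y1 x2))))) (Neg (Neg (Neg (Neg (Gen (1, Th r x2 y1))))))"
      by (rule tcr, rule tcr, rule tcr, rule gc_rel) (use g in \<open>auto simp: trels_def\<close>)
    also have "G3 \<dots> (Times (Sc 1) (Gen (1, Th r x2 y1)))"
      by (rule norm_eq[where cg = "\<lambda>g. (1, g)"], rule id_cg) (simp add: mult_def coeff_def)
    finally show ?thesis using g by (simp add: cg3_def)
  next
    case False
    show ?thesis unfolding cg3_other[OF False] fst_conv snd_conv by (rule gc_sym, rule gc_one_l)
  qed
qed

lemma mem3: "i \<in> I1 \<union> I2 \<union> I3 \<Longrightarrow> (i \<in> I1 \<and> i \<notin> I2 \<and> i \<notin> I3) \<or> (i \<notin> I1 \<and> i \<in> I2 \<and> i \<notin> I3) \<or> (i \<notin> I1 \<and> i \<notin> I2 \<and> i \<in> I3)"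
  using d12 d13 d23 by blast

lemma nev: "v \<in> I1 \<union> I2 \<union> I3 \<Longrightarrow> v \<noteq> x1 \<and> x1 \<noteq> v \<and> v \<noteq> x2 \<and> x2 \<noteq> v \<and> v \<noteq> y1 \<and> y1 \<noteq> v \<and> v \<noteq> y2 \<and> y2 \<noteq> v"
  using out by auto

lemma xfacts: "x1 \<notin> I1" "x1 \<notin> I2" "x1 \<notin> I3" "x2 \<notin> I1" "x2 \<notin> I2" "x2 \<notin> I3"
  "y1 \<notin> I1" "y1 \<notin> I2" "y1 \<notin> I3" "y2 \<notin> I1" "y2 \<notin> I2" "y2 \<notin> I3"
  "x1 \<noteq> x2" "x2 \<noteq> x1" "x1 \<noteq> y1" "y1 \<noteq> x1" "x1 \<noteq> y2" "y2 \<noteq> x1"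
  "x2 \<noteq> y1" "y1 \<noteq> x2" "x2 \<noteq> y2" "y2 \<noteq> x2" "y1 \<noteq> y2" "y2 \<noteq> y1"
  using out dist by auto

lemma co_th:
  assumes ij: "i \<in> I1 \<union> I2 \<union> I3" "j \<in> I1 \<union> I2 \<union> I3" "i \<noteq> j"
  shows "G3 (subst (DltId x1 x2 I1 (insert y1 I2)) (delta_g y1 y2 (I1 \<union> I2) I3 (th i j)))
            (subst (IdDlt y1 y2 (insert x2 I2) I3) (delta_g x1 x2 I1 (I2 \<union> I3) (th i j)) :: (nat \<times> 'a bvh, 'k::field) fexpr)"
  using mem3[OF ij(1)] mem3[OF ij(2)] nev[OF ij(1)] nev[OF ij(2)] 
  apply (elim disjE conjE)
  apply (rule norm_eq[where cg = cg3], rule cg3_valid, simp add: xfacts DltId_def IdDlt_def shiftT_def Lf_def Rf_def mult_def coeff_def cg3_def)+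
  done

lemma co_Th:
  assumes ij: "i \<in> I1 \<union> I2 \<union> I3" "j \<in> I1 \<union> I2 \<union> I3" "k \<in> I1 \<union> I2 \<union> I3"
  shows "G3 (subst (DltId x1 x2 I1 (insert y1 I2)) (delta_g y1 y2 (I1 \<union> I2) I3 (Th i j k)))
            (subst (IdDlt y1 y2 (insert x2 I2) I3) (delta_g x1 x2 I1 (I2 \<union> I3) (Th i j k)) :: (nat \<times> 'a bvh, 'k::field) fexpr)"
  using mem3[OF ij(1)] mem3[OF ij(2)] mem3[OF ij(3)] nev[OF ij(1)] nev[OF ij(2)] nev[OF ij(3)]
  apply (elim disjE conjE)
  apply (rule norm_eq[where cg = cg3], rule cg3_valid, simp add: xfacts DltId_def IdDlt_def shiftT_def Lf_def Rf_def caseA_def caseB_def mult_def coeff_def cg3_def)+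
  done

lemma part3:
  assumes e: "wf_over (tgens [I1 \<union> I2 \<union> I3]) e"
  shows "teq T3
            (subst (DltId x1 x2 I1 (insert y1 I2)) (subst (Dlt y1 y2 (I1 \<union> I2) I3) e))
            (subst (IdDlt y1 y2 (insert x2 I2) I3) (subst (Dlt x1 x2 I1 (I2 \<union> I3)) e) :: (nat \<times> 'a bvh, 'k::field) fexpr)"
  unfolding teq_odt subst_subst
proof (rule subst_cong_gc)
  fix g assume "g \<in> gens_of e"
  with e obtain g' where g: "g = (0, g')" "g' \<in> bvh_gens (I1 \<union> I2 \<union> I3)"
    by (auto simp: wf_over_def tgens_def)
  show "G3 (subst (DltId x1 x2 I1 (insert y1 I2)) (Dlt y1 y2 (I1 \<union> I2) I3 g))
          (subst (IdDlt y1 y2 (insert x2 I2) I3) (Dlt x1 x2 I1 (I2 \<union> I3) g) :: (nat \<times> 'a bvh, 'k::field) fexpr)"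
  proof (cases g')
    case (th i j)
    with g have "i \<in> I1 \<union> I2 \<union> I3" "j \<in> I1 \<union> I2 \<union> I3" "i \<noteq> j" by (auto simp: bvh_gens_def)
    then show ?thesis unfolding g th Dlt_def prod.case by (rule co_th)
  next
    case (Th i j k)
    with g have "i \<in> I1 \<union> I2 \<union> I3" "j \<in> I1 \<union> I2 \<union> I3" "k \<in> I1 \<union> I2 \<union> I3" by (auto simp: bvh_gens_def)
    then show ?thesis unfolding g Th Dlt_def prod.case by (rule co_Th)
  qed
qed

end

theorem lemma4p3p1:
  shows
   "(\<forall>(I1::'a set) I2 x1 x2.
       finite (I1 \<union> I2) \<and> I1 \<inter> I2 = {} \<and> I1 \<noteq> {} \<and> I2 \<noteq> {} \<and>
       x1 \<notin> I1 \<union> I2 \<and> x2 \<notin> I1 \<union> I2 \<and> x1 \<noteq> x2 \<longrightarrow>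
       is_tmorph [I1 \<union> I2] [insert x1 I1, insert x2 I2]
         (Dlt x1 x2 I1 I2 :: _ \<Rightarrow> (_, 'k::field_char_0) fexpr))
  \<and> (\<forall>(f::'a \<Rightarrow> 'a) I1 I2 J x1 x2.
       finite (I1 \<union> I2) \<and> I1 \<inter> I2 = {} \<and> I1 \<noteq> {} \<and> I2 \<noteq> {} \<and>
       bij_betw f (I1 \<union> I2) J \<and>
       x1 \<notin> I1 \<union> I2 \<union> J \<and> x2 \<notin> I1 \<union> I2 \<union> J \<and> x1 \<noteq> x2 \<longrightarrow>
       (\<forall>e::(nat \<times> 'a bvh, 'k) fexpr. wf_over (tgens [I1 \<union> I2]) e \<longrightarrow>
          teq [insert x1 (f ` I1), insert x2 (f ` I2)]
            (subst (Dlt x1 x2 (f ` I1) (f ` I2)) (subst (renT (\<lambda>_. f)) e))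
            (subst (renT (\<lambda>m. if m = 0 then fix_pt x1 f else fix_pt x2 f))
               (subst (Dlt x1 x2 I1 I2) e))))
  \<and> (\<forall>(I1::'a set) I2 I3 x1 x2 y1 y2.
       finite (I1 \<union> I2 \<union> I3) \<and> I1 \<inter> I2 = {} \<and> I1 \<inter> I3 = {} \<and> I2 \<inter> I3 = {} \<and>
       I1 \<noteq> {} \<and> I2 \<noteq> {} \<and> I3 \<noteq> {} \<and>
       distinct [x1, x2, y1, y2] \<and> set [x1, x2, y1, y2] \<inter> (I1 \<union> I2 \<union> I3) = {} \<longrightarrow>
       (\<forall>e::(nat \<times> 'a bvh, 'k) fexpr. wf_over (tgens [I1 \<union> I2 \<union> I3]) e \<longrightarrow>
          teq [insert x1 I1, insert x2 (insert y1 I2), insert y2 I3]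
            (subst (DltId x1 x2 I1 (insert y1 I2)) (subst (Dlt y1 y2 (I1 \<union> I2) I3) e))
            (subst (IdDlt y1 y2 (insert x2 I2) I3) (subst (Dlt x1 x2 I1 (I2 \<union> I3)) e))))"

proof (intro conjI allI impI)
  fix I1 I2 :: "'a set" and x1 x2 :: 'a
  assume h: "finite (I1 \<union> I2) \<and> I1 \<inter> I2 = {} \<and> I1 \<noteq> {} \<and> I2 \<noteq> {} \<and>
       x1 \<notin> I1 \<union> I2 \<and> x2 \<notin> I1 \<union> I2 \<and> x1 \<noteq> x2"
  show "is_tmorph [I1 \<union> I2] [insert x1 I1, insert x2 I2] (Dlt x1 x2 I1 I2 :: _ \<Rightarrow> (_, 'k::field_char_0) fexpr)"
    by (rule part1) (use h in auto)
next
  fix f :: "'a \<Rightarrow> 'a" and I1 I2 J :: "'a set" and x1 x2 :: 'a and e :: "(nat \<times> 'a bvh, 'k) fexpr"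
  assume h: "finite (I1 \<union> I2) \<and> I1 \<inter> I2 = {} \<and> I1 \<noteq> {} \<and> I2 \<noteq> {} \<and>
       bij_betw f (I1 \<union> I2) J \<and>
       x1 \<notin> I1 \<union> I2 \<union> J \<and> x2 \<notin> I1 \<union> I2 \<union> J \<and> x1 \<noteq> x2"
    and e: "wf_over (tgens [I1 \<union> I2]) e"
  show "teq [insert x1 (f ` I1), insert x2 (f ` I2)]
            (subst (Dlt x1 x2 (f ` I1) (f ` I2)) (subst (renT (\<lambda>_. f)) e))
            (subst (renT (\<lambda>m. if m = 0 then fix_pt x1 f else fix_pt x2 f))
               (subst (Dlt x1 x2 I1 I2) e))"
    by (rule part2[OF _ _ _ _ e]) (use h in \<open>auto simp: bij_betw_def\<close>)
next
  fix I1 I2 I3 :: "'a set" and x1 x2 y1 y2 :: 'a and e :: "(nat \<times> 'a bvh, 'k) fexpr"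
  assume h: "finite (I1 \<union> I2 \<union> I3) \<and> I1 \<inter> I2 = {} \<and> I1 \<inter> I3 = {} \<and> I2 \<inter> I3 = {} \<and>
       I1 \<noteq> {} \<and> I2 \<noteq> {} \<and> I3 \<noteq> {} \<and>
       distinct [x1, x2, y1, y2] \<and> set [x1, x2, y1, y2] \<inter> (I1 \<union> I2 \<union> I3) = {}"
    and e: "wf_over (tgens [I1 \<union> I2 \<union> I3]) e"
  show "teq [insert x1 I1, insert x2 (insert y1 I2), insert y2 I3]
            (subst (DltId x1 x2 I1 (insert y1 I2)) (subst (Dlt y1 y2 (I1 \<union> I2) I3) e))
            (subst (IdDlt y1 y2 (insert x2 I2) I3) (subst (Dlt x1 x2 I1 (I2 \<union> I3)) e))"
    by (rule part3[OF _ _ _ _ _ e]) (use h in auto)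
qed


end
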